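(* Let $\Gamma=(V,E,m)$ be an even-labeled graph with $m_e=2\ell_e$, let $u\in V$ and let $k\ge 2$ be an integer. Let $\mathbb{A}_{\Gamma,u,k}$ be the kernel of the homomorphism $\alpha_{u,k}:\mathbb{A}_\Gamma\to\mathbb{Z}_k$ with $u\mapsto 1$ and $v\mapsto 0$ for $v\ne u$. Put $V_{2,u}=\{v\in V: \{u,v\}\in E,\ m_{\{u,v\}}=2\}$ and $W=V\setminus(\{u\}\cup V_{2,u})$. Then $\mathbb{A}_{\Gamma,u,k}$ is generated by the elements $$\bar u=u^k,\qquad v\ (v\in V_{2,u}),\qquad w_i=u^iwu^{-i}\ (w\in W,\ i=0,\dots,k-1),$$ and, regarding these as abstract letters, a complete set of defining relations is: (R1) $v\bar u=\bar u v$ for $v\in V_{2,u}$; (R2) $(vv')^{\ell_e}=(v'v)^{\ell_e}$ for $v,v'\in V_{2,u}$ with $e=\{v,v'\}\in E$; (R3) $(vw_i)^{\ell_e}=(w_iv)^{\ell_e}$ for $v\in V_{2,u}$, $w\in W$, $e=\{v,w\}\in E$, $i=0,\dots,k-1$; (R4) $(w_iw'_i)^{\ell_e}=(w'_iw_i)^{\ell_e}$ for $w,w'\in W$, $e=\{w,w'\}\in E$, $i=0,\dots,k-1$; (RB) for each $w\in W$ adjacent to $u$, with $e=\{u,w\}$, and each $i=0,\dots,k-1$: $$W_iW_{i+1}\cdots W_{i+\ell_e-1}=W_{i+1}W_{i+2}\cdots W_{i+\ell_e},$$ where for an integer $j\ge 0$ written $j=qk+s$ with $0\le s<k$ we set $W_j:=\bar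 u^{\,q}w_s\bar u^{-q}$.
   Context: Labeled graph $\Gamma=(V,E,m)$: finite simple graph with labels $m_e\in\mathbb{Z}_{\ge2}$; even if all labels are even. Artin group $\mathbb{A}_\Gamma=\langle v\in V\mid \langle uv\rangle^{m_e}=\langle vu\rangle^{m_e},\ \{u,v\}\in E\rangle$, where $\langle uv\rangle^m$ is the alternating word of length $m$ starting with $u$ (for $m=2\ell$ this is $(uv)^\ell=(vu)^\ell$); non-adjacent vertices impose no relation. Since all labels are even, $\alpha_{u,k}$ is a well-defined surjection; its kernel $\mathbb{A}_{\Gamma,u,k}$ is called a co-cyclic subgroup. The presentation above is called the standard presentation of $\mathbb{A}_{\Gamma,u,k}$. *)

theory Defs
  imports "HOL-Algebra.Algebra"
begin

text \<open>A word over an alphabet of type 'a: a list of letters with signs;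
  (True, x) stands for x, (False, x) for x inverse.\<close>
type_synonym 'a word = "(bool \<times> 'a) list"

inductive pres_step :: "('a word \<times> 'a word) set \<Rightarrow> 'a word \<Rightarrow> 'a word \<Rightarrow> bool"
  for R where
  cancel: "pres_step R (p @ [(b, x), (\<not> b, x)] @ q) (p @ q)"
| rel: "(r, s) \<in> R \<Longrightarrow> pres_step R (p @ r @ q) (p @ s @ q)"

text \<open>Equality in the group given by generators and relations R
  (equality in the free group modulo the normal closure of the relations).\<close>
definition pres_eqv :: "('a word \<times> 'a word) set \<Rightarrow> 'a word \<Rightarrow> 'a word \<Rightarrow> bool" where
  "pres_eqv R = equivclp (pres_step R)"

definition word_eval :: "('g, 'b) monoid_scheme \<Rightarrow> ('a \<Rightarrow> 'g) \<Rightarrow> 'a word \<Rightarrow> 'g" where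
  "word_eval G g w =
     foldr (\<lambda>(b, x) acc. (if b then g x else inv\<^bsub>G\<^esub> (g x)) \<otimes>\<^bsub>G\<^esub> acc) w \<one>\<^bsub>G\<^esub>"

text \<open>G is presented by generators X and relations R via g:
  the elements g x (x in X) generate G, and two words over X are equal in G
  iff they are equal modulo the relations (i.e. R is a complete set of defining
  relations).\<close>
definition presents :: "('g, 'b) monoid_scheme \<Rightarrow> 'a set \<Rightarrow> ('a word \<times> 'a word) set \<Rightarrow> ('a \<Rightarrow> 'g) \<Rightarrow> bool" where
  "presents G Xs R g \<longleftrightarrow>
     group G \<and> g ` Xs \<subseteq> carrier G \<and> generate G (g ` Xs) = carrier G \<and>
     (\<forall>w1 \<in> lists {p. snd p \<in> Xs}. \<forall>w2 \<in> lists {p. snd p \<in> Xs}.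
        word_eval G g w1 = word_eval G g w2 \<longleftrightarrow> pres_eqv R w1 w2)"

definition even_labeled_graph :: "'v set \<Rightarrow> 'v set set \<Rightarrow> ('v set \<Rightarrow> nat) \<Rightarrow> bool" where
  "even_labeled_graph V E m \<longleftrightarrow>
     finite V \<and> (\<forall>e \<in> E. \<exists>a b. a \<in> V \<and> b \<in> V \<and> a \<noteq> b \<and> e = {a, b}) \<and>
     (\<forall>e \<in> E. 2 \<le> m e \<and> even (m e))"

definition alt_word :: "'a \<Rightarrow> 'a \<Rightarrow> nat \<Rightarrow> 'a word" where
  "alt_word x y n = map (\<lambda>i. (True, if even i then x else y)) [0..<n]"

definition artin_rels :: "'v set set \<Rightarrow> ('v set \<Rightarrow> nat) \<Rightarrow> ('v word \<times> 'v word) set" where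
  "artin_rels E m = {(alt_word a b (m {a, b}), alt_word b a (m {a, b})) | a b. {a, b} \<in> E}"

text \<open>Abstract letters: Ubar = u^k, Vg v for v in V_{2,u}, Wg w i = w_i.\<close>
datatype 'v cletter = Ubar | Vg 'v | Wg 'v nat

definition V2 :: "'v set \<Rightarrow> 'v set set \<Rightarrow> ('v set \<Rightarrow> nat) \<Rightarrow> 'v \<Rightarrow> 'v set" where
  "V2 V E m u = {v \<in> V. {u, v} \<in> E \<and> m {u, v} = 2}"

definition Wset :: "'v set \<Rightarrow> 'v set set \<Rightarrow> ('v set \<Rightarrow> nat) \<Rightarrow> 'v \<Rightarrow> 'v set" where
  "Wset V E m u = V - ({u} \<union> V2 V E m u)"

definition cocyc_gens :: "'v set \<Rightarrow> 'v set set \<Rightarrow> ('v set \<Rightarrow> nat) \<Rightarrow> 'v \<Rightarrow> nat \<Rightarrow> 'v cletter set" where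
  "cocyc_gens V E m u k =
     {Ubar} \<union> Vg ` V2 V E m u \<union> {Wg w i | w i. w \<in> Wset V E m u \<and> i < k}"

definition pow2_word :: "'a \<Rightarrow> 'a \<Rightarrow> nat \<Rightarrow> 'a word" where
  "pow2_word x y l = concat (replicate l [(True, x), (True, y)])"

definition Wj_word :: "nat \<Rightarrow> 'v \<Rightarrow> nat \<Rightarrow> 'v cletter word" where
  "Wj_word k w j = replicate (j div k) (True, Ubar) @ [(True, Wg w (j mod k))]
                   @ replicate (j div k) (False, Ubar)"

definition cocyc_rels :: "'v set \<Rightarrow> 'v set set \<Rightarrow> ('v set \<Rightarrow> nat) \<Rightarrow> 'v \<Rightarrow> nat \<Rightarrow>
    ('v cletter word \<times> 'v cletter word) set" where
  "cocyc_rels V E m u k =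
     \<comment> \<open>(R1)\<close>
     {([(True, Vg v), (True, Ubar)], [(True, Ubar), (True, Vg v)]) | v. v \<in> V2 V E m u}
   \<union> \<comment> \<open>(R2)\<close>
     {(pow2_word (Vg v) (Vg v') (m {v, v'} div 2), pow2_word (Vg v') (Vg v) (m {v, v'} div 2)) | v v'.
        v \<in> V2 V E m u \<and> v' \<in> V2 V E m u \<and> {v, v'} \<in> E}
   \<union> \<comment> \<open>(R3)\<close>
     {(pow2_word (Vg v) (Wg w i) (m {v, w} div 2), pow2_word (Wg w i) (Vg v) (m {v, w} div 2)) | v w i.
        v \<in> V2 V E m u \<and> w \<in> Wset V E m u \<and> {v, w} \<in> E \<and> i < k}
   \<union> \<comment> \<open>(R4)\<close>
     {(pow2_word (Wg w i) (Wg w' i) (m {w, w'} div 2), pow2_word (Wg w' i) (Wg w i) (m {w, w'} div 2)) | w w' i.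
        w \<in> Wset V E m u \<and> w' \<in> Wset V E m u \<and> {w, w'} \<in> E \<and> i < k}
   \<union> \<comment> \<open>(RB)\<close>
     {(concat (map (\<lambda>t. Wj_word k w (i + t)) [0..<m {u, w} div 2]),
       concat (map (\<lambda>t. Wj_word k w (i + 1 + t)) [0..<m {u, w} div 2])) | w i.
        w \<in> Wset V E m u \<and> {u, w} \<in> E \<and> i < k}"

definition cocyc_gen_val :: "('g, 'b) monoid_scheme \<Rightarrow> ('v \<Rightarrow> 'g) \<Rightarrow> 'v \<Rightarrow> nat \<Rightarrow> 'v cletter \<Rightarrow> 'g" where
  "cocyc_gen_val A gen u k x = (case x of
      Ubar \<Rightarrow> gen u [^]\<^bsub>A\<^esub> k
    | Vg v \<Rightarrow> gen v
    | Wg w i \<Rightarrow> gen u [^]\<^bsub>A\<^esub> i \<otimes>\<^bsub>A\<^esub> gen w \<otimes>\<^bsub>A\<^esub> inv\<^bsub>A\<^esub> (gen u [^]\<^bsub>A\<^esub> i))"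

end

theory Submission
  imports Defs
begin



lemma word_eval_Nil [simp]: "word_eval G g [] = \<one>\<^bsub>G\<^esub>"
  by (simp add: word_eval_def)

lemma word_eval_Cons [simp]:
  "word_eval G g ((b, x) # w) = (if b then g x else inv\<^bsub>G\<^esub> (g x)) \<otimes>\<^bsub>G\<^esub> word_eval G g w"
  by (simp add: word_eval_def)

definition winv :: "'a word \<Rightarrow> 'a word" where
  "winv w = rev (map (\<lambda>(b, x). (\<not> b, x)) w)"

context group
begin

lemma word_eval_closed:
  "\<forall>p\<in>set w. g (snd p) \<in> carrier G \<Longrightarrow> word_eval G g w \<in> carrier G"
  by (induction w) auto

lemma word_eval_append:
  assumes "\<forall>p\<in>set w. g (snd p) \<in> carrier G" "\<forall>p\<in>set v. g (snd p) \<in> carrier G"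
  shows "word_eval G g (w @ v) = word_eval G g w \<otimes> word_eval G g v"
  using assms
proof (induction w)
  case Nil
  then show ?case using word_eval_closed[OF Nil(2)] by simp
next
  case (Cons a w)
  obtain b x where a: "a = (b, x)" by (cases a)
  have c: "g x \<in> carrier G" using Cons a by auto
  show ?case using Cons a c word_eval_closed[of w g] word_eval_closed[of v g]
    by (auto simp: m_assoc)
qed

lemma pow_comm1: "x \<in> carrier G \<Longrightarrow> x \<otimes> x [^] (n::nat) = x [^] n \<otimes> x"
  by (metis nat_pow_Suc nat_pow_Suc2)

lemma word_eval_rep_T:
  "g x \<in> carrier G \<Longrightarrow> word_eval G g (replicate n (True, x)) = g x [^] n"
  by (induction n) (auto simp: pow_comm1)

lemma word_eval_rep_F:
  assumes "g x \<in> carrier G" shows "word_eval G g (replicate n (False, x)) = inv (g x [^] n)"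
proof -
  have "word_eval G g (replicate n (False, x)) = inv (g x) [^] n"
    using assms by (induction n) (auto simp: pow_comm1)
  then show ?thesis using assms by (simp add: nat_pow_inv)
qed

lemma word_eval_pow2:
  assumes "g x \<in> carrier G" "g y \<in> carrier G"
  shows "word_eval G g (pow2_word x y l) = (g x \<otimes> g y) [^] l"
  using assms by (induction l) (auto simp: pow2_word_def pow_comm1 m_assoc[symmetric])

lemma word_eval_winv:
  "\<forall>p\<in>set w. g (snd p) \<in> carrier G \<Longrightarrow> word_eval G g (winv w) = inv (word_eval G g w)"
proof (induction w)
  case Nil
  then show ?case by (simp add: winv_def)
next
  case (Cons a w)
  obtain b x where a: "a = (b, x)" by (cases a)
  have c: "g x \<in> carrier G" using Cons a by auto
  have w: "winv (a # w) = winv w @ [(\<not> b, x)]" by (simp add: winv_def a)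
  have s: "\<forall>p\<in>set (winv w). g (snd p) \<in> carrier G" using Cons by (auto simp: winv_def)
  show ?case using Cons c s unfolding w
    by (subst word_eval_append) (auto simp: a inv_mult_group word_eval_closed)
qed

lemma generate_word:
  assumes "g ` Xs \<subseteq> carrier G" "h \<in> generate G (g ` Xs)"
  shows "\<exists>w \<in> lists {p. snd p \<in> Xs}. word_eval G g w = h"
  using assms(2)
proof (induction rule: generate.induct)
  case one
  then show ?case by (intro bexI[of _ "[]"]) auto
next
  case (incl h)
  then obtain x where "x \<in> Xs" "h = g x" by auto
  then show ?case using assms(1) by (intro bexI[of _ "[(True, x)]"]) auto
next
  case (inv h)
  then obtain x where "x \<in> Xs" "h = g x" by auto
  then show ?case using assms(1) by (intro bexI[of _ "[(False, x)]"]) auto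
next
  case (eng h1 h2)
  then obtain w1 w2 where "w1 \<in> lists {p. snd p \<in> Xs}" "word_eval G g w1 = h1"
    "w2 \<in> lists {p. snd p \<in> Xs}" "word_eval G g w2 = h2" by blast
  moreover have "word_eval G g (w1 @ w2) = word_eval G g w1 \<otimes> word_eval G g w2"
    by (rule word_eval_append) (use assms(1) \<open>w1 \<in> _\<close> \<open>w2 \<in> _\<close> in auto)
  ultimately show ?case by (intro bexI[of _ "w1 @ w2"]) auto
qed

lemma word_in_generate:
  assumes "g ` Xs \<subseteq> carrier G" "w \<in> lists {p. snd p \<in> Xs}"
  shows "word_eval G g w \<in> generate G (g ` Xs)"
  using assms(2)
proof (induction w)
  case Nil
  then show ?case by (simp add: generate.one)
next
  case (Cons a w)
  obtain b x where a: "a = (b, x)" by (cases a)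
  then show ?case using Cons
    by (cases b) (auto intro!: generate.eng[OF generate.incl] generate.eng[OF generate.inv])
qed

end

lemma pres_step_ctx: "pres_step R x y \<Longrightarrow> pres_step R (p @ x @ q) (p @ y @ q)"
proof (induction rule: pres_step.induct)
  case (cancel p' b x q')
  then show ?case using pres_step.cancel[of R "p @ p'" b x "q' @ q"] by simp
next
  case (rel r s p' q')
  then show ?case using pres_step.rel[of r s R "p @ p'" "q' @ q"] by simp
qed

lemma pres_eqv_ctx: "pres_eqv R x y \<Longrightarrow> pres_eqv R (p @ x @ q) (p @ y @ q)"
  unfolding pres_eqv_def
proof (induction rule: equivclp_induct)
  case base
  then show ?case by simp
next
  case (step y z)
  then show ?case
    by (meson equivclp_into_equivclp pres_step_ctx)
qed

lemma pres_eqv_refl [simp]: "pres_eqv R x x"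
  by (simp add: pres_eqv_def)

lemma pres_eqv_sym: "pres_eqv R x y \<Longrightarrow> pres_eqv R y x"
  by (simp add: pres_eqv_def equivclp_sym)

lemma pres_eqv_trans: "pres_eqv R x y \<Longrightarrow> pres_eqv R y z \<Longrightarrow> pres_eqv R x z"
  unfolding pres_eqv_def by (rule equivclp_trans)

lemma pres_eqv_rel: "(r, s) \<in> R \<Longrightarrow> pres_eqv R (p @ r @ q) (p @ s @ q)"
  unfolding pres_eqv_def by (intro r_into_equivclp pres_step.rel)

lemma pres_eqv_cancel: "pres_eqv R (p @ [(b, x), (\<not> b, x)] @ q) (p @ q)"
  unfolding pres_eqv_def by (intro r_into_equivclp pres_step.cancel)

lemma pres_eqv_cancel_rep:
  "pres_eqv R (p @ replicate n (\<not> b, x) @ replicate n (b, x) @ q) (p @ q)"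
proof (induction n)
  case 0
  then show ?case by simp
next
  case (Suc n)
  have e: "p @ replicate (Suc n) (\<not> b, x) @ replicate (Suc n) (b, x) @ q
     = (p @ replicate n (\<not> b, x)) @ [(\<not> b, x), (\<not> \<not> b, x)] @ (replicate n (b, x) @ q)"
    by (simp add: replicate_append_same[symmetric])
  show ?case unfolding e
    by (rule pres_eqv_trans[OF pres_eqv_cancel]) (use Suc in simp)
qed




locale cocyc =
  fixes V :: "'v set" and E :: "'v set set" and m :: "'v set \<Rightarrow> nat"
    and A :: "('g, 'b) monoid_scheme" and gen :: "'v \<Rightarrow> 'g"
    and \<alpha> :: "'g \<Rightarrow> int" and u :: 'v and k :: nat
  assumes graph: "even_labeled_graph V E m"
    and pres: "presents A V (artin_rels E m) gen"
    and uV: "u \<in> V" and k2: "2 \<le> k"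
    and hom: "\<alpha> \<in> hom A (integer_mod_group k)"
    and au: "\<alpha> (gen u) = 1"
    and av: "\<And>v. v \<in> V \<Longrightarrow> v \<noteq> u \<Longrightarrow> \<alpha> (gen v) = 0"
begin

abbreviation "S \<equiv> V2 V E m u"
abbreviation "Wv \<equiv> Wset V E m u"
abbreviation "R \<equiv> cocyc_rels V E m u k"
abbreviation "Xs \<equiv> cocyc_gens V E m u k"

definition tss :: "nat \<Rightarrow> bool \<times> 'v \<Rightarrow> nat" where
  "tss s l = (if snd l = u then (if fst l then (if Suc s = k then 0 else Suc s)
                 else (if s = 0 then k - 1 else s - 1)) else s)"

definition tso :: "nat \<Rightarrow> bool \<times> 'v \<Rightarrow> 'v cletter word" where
  "tso s l = (if snd l = u then (if fst l then (if Suc s = k then [(True, Ubar)] else [])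
                 else (if s = 0 then [(False, Ubar)] else []))
              else if snd l \<in> S then [(fst l, Vg (snd l))] else [(fst l, Wg (snd l) s)])"

fun tout :: "nat \<Rightarrow> 'v word \<Rightarrow> 'v cletter word" where
  "tout s [] = []"
| "tout s (l # ls) = tso s l @ tout (tss s l) ls"

fun tfin :: "nat \<Rightarrow> 'v word \<Rightarrow> nat" where
  "tfin s [] = s"
| "tfin s (l # ls) = tfin (tss s l) ls"

lemma tout_append: "tout s (x @ y) = tout s x @ tout (tfin s x) y"
  by (induction x arbitrary: s) auto

lemma tfin_append: "tfin s (x @ y) = tfin (tfin s x) y"
  by (induction x arbitrary: s) auto

lemma k_pos: "0 < k" using k2 by simp

lemma tss_lt: "s < k \<Longrightarrow> tss s l < k"
  using k2 by (auto simp: tss_def)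

lemma tfin_lt: "s < k \<Longrightarrow> tfin s w < k"
  by (induction w arbitrary: s) (auto simp: tss_lt)

lemma S_props: "x \<in> S \<Longrightarrow> x \<in> V \<and> x \<noteq> u \<and> {u, x} \<in> E \<and> m {u, x} = 2"
proof -
  assume x: "x \<in> S"
  then have "{u, x} \<in> E" "x \<in> V" "m {u, x} = 2" by (auto simp: V2_def)
  moreover have "x \<noteq> u"
  proof
    assume "x = u"
    with \<open>{u, x} \<in> E\<close> have "{u} \<in> E" by simp
    then show False using graph unfolding even_labeled_graph_def
      by (metis doubleton_eq_iff insert_absorb2)
  qed
  ultimately show ?thesis by simp
qed

lemma edge_props: "{a, b} \<in> E \<Longrightarrow> a \<in> V \<and> b \<in> V \<and> a \<noteq> b \<and> m {a, b} = 2 * (m {a, b} div 2)"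
proof -
  assume e: "{a, b} \<in> E"
  from graph e obtain a' b' where "a' \<in> V" "b' \<in> V" "a' \<noteq> b'" "{a, b} = {a', b'}"
    "even (m {a, b})" unfolding even_labeled_graph_def by metis
  then show ?thesis by (auto simp: doubleton_eq_iff)
qed

lemma Wv_iff: "x \<in> Wv \<longleftrightarrow> x \<in> V \<and> x \<noteq> u \<and> x \<notin> S"
  by (auto simp: Wset_def)

lemma tout_nou:
  "\<forall>l\<in>set w. snd l \<noteq> u \<Longrightarrow>
     tout s w = map (\<lambda>(b, x). (b, if x \<in> S then Vg x else Wg x s)) w \<and> tfin s w = s"
  by (induction w) (auto simp: tso_def tss_def)

lemma alt_pow2: "alt_word x y (2 * l) = pow2_word x y l"
proof (induction l)
  case 0
  then show ?case by (simp add: alt_word_def pow2_word_def)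
next
  case (Suc l)
  have "alt_word x y (2 * Suc l) = alt_word x y (2 * l) @ [(True, x), (True, y)]"
    by (simp add: alt_word_def)
  moreover have "pow2_word x y (Suc l) = pow2_word x y l @ [(True, x), (True, y)]"
    by (simp add: pow2_word_def replicate_append_same[symmetric])
  ultimately show ?case using Suc by simp
qed

lemma pow2_Suc_end: "pow2_word x y (Suc l) = pow2_word x y l @ [(True, x), (True, y)]"
  by (simp add: pow2_word_def replicate_append_same[symmetric])

lemma map_alt: "map (\<lambda>(b, x). (b, f x)) (alt_word a c n) = alt_word (f a) (f c) n"
  by (simp add: alt_word_def)

lemma tout_repT: "s + n < k \<Longrightarrow> tout s (replicate n (True, u)) = [] \<and> tfin s (replicate n (True, u)) = s + n"
  by (induction n arbitrary: s) (auto simp: tso_def tss_def)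

lemma tout_repF: "n \<le> s \<Longrightarrow> tout s (replicate n (False, u)) = [] \<and> tfin s (replicate n (False, u)) = s - n"
  by (induction n arbitrary: s) (auto simp: tso_def tss_def)

definition Wseq :: "'v \<Rightarrow> nat \<Rightarrow> nat \<Rightarrow> 'v cletter word" where
  "Wseq w a l = concat (map (\<lambda>t. Wj_word k w (a + t)) [0..<l])"

lemma Wseq_Suc: "Wseq w a (Suc l) = Wseq w a l @ Wj_word k w (a + l)"
  by (simp add: Wseq_def)

lemma div_mod_Suc:
  "Suc n div k = (if Suc (n mod k) = k then Suc (n div k) else n div k) \<and>
   Suc n mod k = (if Suc (n mod k) = k then 0 else Suc (n mod k))"
  using k_pos by (auto simp: div_Suc mod_Suc)

end




context cocyc
begin

lemma claimA:
  assumes j: "j < k" and w: "w \<noteq> u" "w \<notin> S"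
  shows "pres_eqv R (tout j (pow2_word u w l)) (Wseq w (j + 1) l @ replicate ((j + l) div k) (True, Ubar))
         \<and> tfin j (pow2_word u w l) = (j + l) mod k"
proof (induction l)
  case 0
  then show ?case using j by (simp add: pow2_word_def Wseq_def)
next
  case (Suc l)
  define s where "s = (j + l) mod k"
  define q where "q = (j + l) div k"
  define s' where "s' = (j + 1 + l) mod k"
  define q' where "q' = (j + 1 + l) div k"
  have sk: "s < k" using k_pos by (simp add: s_def)
  have dm: "q' = (if Suc s = k then Suc q else q) \<and> s' = (if Suc s = k then 0 else Suc s)"
    using div_mod_Suc[of "j + l"] by (simp add: s_def q_def s'_def q'_def)
  have fin: "tfin j (pow2_word u w l) = s" using Suc s_def by simp
  have t2: "tout s [(True, u), (True, w)] = (if Suc s = k then [(True, Ubar)] else []) @ [(True, Wg w s')]"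
    using w dm by (auto simp: tso_def tss_def)
  have f2: "tfin s [(True, u), (True, w)] = s'"
    using w dm by (auto simp: tss_def)
  have e1: "tout j (pow2_word u w (Suc l)) = tout j (pow2_word u w l) @ (if Suc s = k then [(True, Ubar)] else []) @ [(True, Wg w s')]"
    by (simp only: pow2_Suc_end tout_append fin t2)
  have p1: "pres_eqv R (tout j (pow2_word u w (Suc l)))
     ((Wseq w (j + 1) l @ replicate q (True, Ubar)) @ (if Suc s = k then [(True, Ubar)] else []) @ [(True, Wg w s')])"
    unfolding e1 using pres_eqv_ctx[OF conjunct1[OF Suc], of "[]"] by (simp add: q_def)
  have e2: "(Wseq w (j + 1) l @ replicate q (True, Ubar)) @ (if Suc s = k then [(True, Ubar)] else []) @ [(True, Wg w s')]
      = Wseq w (j + 1) l @ replicate q' (True, Ubar) @ [(True, Wg w s')]"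
    using dm by (auto simp: replicate_append_same[symmetric])
  have e3: "Wseq w (j + 1) (Suc l) @ replicate ((j + Suc l) div k) (True, Ubar)
     = (Wseq w (j + 1) l @ replicate q' (True, Ubar) @ [(True, Wg w s')]) @ replicate q' (False, Ubar) @ replicate q' (True, Ubar) @ []"
    by (simp add: Wseq_Suc Wj_word_def q'_def s'_def add.assoc)
  have p2: "pres_eqv R (Wseq w (j + 1) (Suc l) @ replicate ((j + Suc l) div k) (True, Ubar))
     (Wseq w (j + 1) l @ replicate q' (True, Ubar) @ [(True, Wg w s')])"
    unfolding e3 using pres_eqv_cancel_rep[of R "Wseq w (j + 1) l @ replicate q' (True, Ubar) @ [(True, Wg w s')]" q' True Ubar "[]"] by simp
  have "pres_eqv R (tout j (pow2_word u w (Suc l))) (Wseq w (j + 1) (Suc l) @ replicate ((j + Suc l) div k) (True, Ubar))"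
    using pres_eqv_trans[OF p1[unfolded e2] pres_eqv_sym[OF p2]] .
  moreover have "tfin j (pow2_word u w (Suc l)) = (j + Suc l) mod k"
    by (simp only: pow2_Suc_end tfin_append fin f2) (simp add: s'_def)
  ultimately show ?case by simp
qed

lemma claimB:
  assumes j: "j < k" and w: "w \<noteq> u" "w \<notin> S"
  shows "pres_eqv R (tout j (pow2_word w u l)) (Wseq w j l @ replicate ((j + l) div k) (True, Ubar))
         \<and> tfin j (pow2_word w u l) = (j + l) mod k"
proof (induction l)
  case 0
  then show ?case using j by (simp add: pow2_word_def Wseq_def)
next
  case (Suc l)
  define s where "s = (j + l) mod k"
  define q where "q = (j + l) div k"
  define s' where "s' = (j + 1 + l) mod k"
  define q' where "q' = (j + 1 + l) div k"
  have sk: "s < k" using k_pos by (simp add: s_def)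
  have dm: "q' = (if Suc s = k then Suc q else q) \<and> s' = (if Suc s = k then 0 else Suc s)"
    using div_mod_Suc[of "j + l"] by (simp add: s_def q_def s'_def q'_def)
  have fin: "tfin j (pow2_word w u l) = s" using Suc s_def by simp
  have t2: "tout s [(True, w), (True, u)] = [(True, Wg w s)] @ (if Suc s = k then [(True, Ubar)] else [])"
    using w by (auto simp: tso_def tss_def)
  have f2: "tfin s [(True, w), (True, u)] = s'"
    using w dm by (auto simp: tss_def)
  have e1: "tout j (pow2_word w u (Suc l)) = tout j (pow2_word w u l) @ [(True, Wg w s)] @ (if Suc s = k then [(True, Ubar)] else [])"
    by (simp only: pow2_Suc_end tout_append fin t2)
  have p1: "pres_eqv R (tout j (pow2_word w u (Suc l)))
     ((Wseq w j l @ replicate q (True, Ubar)) @ [(True, Wg w s)] @ (if Suc s = k then [(True, Ubar)] else []))"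
    unfolding e1 using pres_eqv_ctx[OF conjunct1[OF Suc], of "[]"] by (simp add: q_def)
  have e3: "Wseq w j (Suc l) @ replicate ((j + Suc l) div k) (True, Ubar)
     = (Wseq w j l @ replicate q (True, Ubar) @ [(True, Wg w s)]) @ replicate q (False, Ubar) @ replicate q (True, Ubar) @ (if Suc s = k then [(True, Ubar)] else [])"
    using dm by (auto simp: Wseq_Suc Wj_word_def q_def s_def q'_def replicate_append_same[symmetric])
  have p2: "pres_eqv R (Wseq w j (Suc l) @ replicate ((j + Suc l) div k) (True, Ubar))
     (Wseq w j l @ replicate q (True, Ubar) @ [(True, Wg w s)] @ (if Suc s = k then [(True, Ubar)] else []))"
    unfolding e3 using pres_eqv_cancel_rep[of R "Wseq w j l @ replicate q (True, Ubar) @ [(True, Wg w s)]" q True Ubar "if Suc s = k then [(True, Ubar)] else []"] by simp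
  have "pres_eqv R (tout j (pow2_word w u (Suc l))) (Wseq w j (Suc l) @ replicate ((j + Suc l) div k) (True, Ubar))"
    using pres_eqv_trans[OF p1[simplified append_assoc] pres_eqv_sym[OF p2]] .
  moreover have "tfin j (pow2_word w u (Suc l)) = (j + Suc l) mod k"
    by (simp only: pow2_Suc_end tfin_append fin f2) (simp add: s'_def)
  ultimately show ?case by simp
qed

end




context cocyc
begin

definition ok :: "'v word \<Rightarrow> 'v word \<Rightarrow> bool" where
  "ok x y \<longleftrightarrow> (\<forall>j<k. pres_eqv R (tout j x) (tout j y) \<and> tfin j x = tfin j y)"

lemma ok_sym: "ok x y \<Longrightarrow> ok y x"
  by (auto simp: ok_def intro: pres_eqv_sym)

lemma ok_trans: "ok x y \<Longrightarrow> ok y z \<Longrightarrow> ok x z"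
  by (auto simp: ok_def intro: pres_eqv_trans)

lemma rel_eqv: "(r, s) \<in> R \<Longrightarrow> pres_eqv R r s"
  using pres_eqv_rel[of r s R "[]" "[]"] by simp

lemma edge_u:
  assumes e: "{u, b} \<in> E"
  shows "ok (alt_word u b (m {u, b})) (alt_word b u (m {u, b}))"
proof -
  from edge_props[OF e] have bV: "b \<in> V" "b \<noteq> u" and M: "m {u, b} = 2 * (m {u, b} div 2)" by auto
  show ?thesis
  proof (cases "b \<in> S")
    case True
    then have m2: "m {u, b} = 2" by (auto simp: V2_def)
    have a1: "alt_word u b (m {u, b}) = [(True, u), (True, b)]"
      and a2: "alt_word b u (m {u, b}) = [(True, b), (True, u)]"
      by (simp_all add: m2 alt_word_def numeral_2_eq_2 upt_rec)
    have r1: "([(True, Vg b), (True, Ubar)], [(True, Ubar), (True, Vg b)]) \<in> R"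
      using True unfolding cocyc_rels_def by blast
    show ?thesis unfolding ok_def a1 a2
      using True bV rel_eqv[OF r1] by (auto simp: tso_def tss_def intro: pres_eqv_sym)
  next
    case False
    define l where "l = m {u, b} div 2"
    have bW: "b \<in> Wv" using False bV by (simp add: Wv_iff)
    have a1: "alt_word u b (m {u, b}) = pow2_word u b l"
      and a2: "alt_word b u (m {u, b}) = pow2_word b u l"
      using M by (metis alt_pow2 l_def)+
    show ?thesis unfolding ok_def a1 a2
    proof (intro allI impI conjI)
      fix j assume j: "j < k"
      have rb: "(Wseq b j l, Wseq b (j + 1) l) \<in> R"
        unfolding cocyc_rels_def Wseq_def l_def using bW e j by blast
      note A = claimA[OF j bV(2) False, of l] and B = claimB[OF j bV(2) False, of l]
      have C: "pres_eqv R (Wseq b (j + 1) l @ replicate ((j + l) div k) (True, Ubar)) (Wseq b j l @ replicate ((j + l) div k) (True, Ubar))"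
        using pres_eqv_sym[OF pres_eqv_ctx[OF rel_eqv[OF rb], of "[]" "replicate ((j + l) div k) (True, Ubar)"]] by simp
      show "pres_eqv R (tout j (pow2_word u b l)) (tout j (pow2_word b u l))"
        using pres_eqv_trans[OF conjunct1[OF A] pres_eqv_trans[OF C pres_eqv_sym[OF conjunct1[OF B]]]] .
      show "tfin j (pow2_word u b l) = tfin j (pow2_word b u l)" using A B by simp
    qed
  qed
qed

lemma edge_nou:
  assumes e: "{a, b} \<in> E" and au: "a \<noteq> u" and bu: "b \<noteq> u"
  shows "ok (alt_word a b (m {a, b})) (alt_word b a (m {a, b}))"
proof -
  from edge_props[OF e] have V: "a \<in> V" "b \<in> V" "a \<noteq> b" and M: "m {a, b} = 2 * (m {a, b} div 2)" by auto
  define l where "l = m {a, b} div 2"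
  have mba: "m {b, a} = m {a, b}" by (simp add: insert_commute)
  have eba: "{b, a} \<in> E" using e by (simp add: insert_commute)
  show ?thesis unfolding ok_def
  proof (intro allI impI)
    fix j assume j: "j < k"
    define f where "f = (\<lambda>x. if x \<in> S then Vg x else Wg x j)"
    have nu: "\<forall>l\<in>set (alt_word a b n). snd l \<noteq> u" "\<forall>l\<in>set (alt_word b a n). snd l \<noteq> u" for n
      using au bu by (auto simp: alt_word_def)
    have t1: "tout j (alt_word a b (m {a, b})) = pow2_word (f a) (f b) l"
      using tout_nou[OF nu(1)] map_alt[of f] M unfolding f_def l_def
      by (metis (no_types, lifting) alt_pow2)
    have t2: "tout j (alt_word b a (m {a, b})) = pow2_word (f b) (f a) l"
      using tout_nou[OF nu(2)] map_alt[of f] M unfolding f_def l_def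
      by (metis (no_types, lifting) alt_pow2)
    have fin: "tfin j (alt_word a b (m {a, b})) = tfin j (alt_word b a (m {a, b}))"
      using tout_nou[OF nu(1)] tout_nou[OF nu(2)] by simp
    have "(pow2_word (f a) (f b) l, pow2_word (f b) (f a) l) \<in> R \<or>
          (pow2_word (f b) (f a) l, pow2_word (f a) (f b) l) \<in> R"
    proof (cases "a \<in> S"; cases "b \<in> S")
      assume h: "a \<in> S" "b \<in> S"
      then have fa: "f a = Vg a" "f b = Vg b" by (simp_all add: f_def)
      have "(pow2_word (Vg a) (Vg b) (m {a, b} div 2), pow2_word (Vg b) (Vg a) (m {a, b} div 2)) \<in> R"
        unfolding cocyc_rels_def using e h by blast
      then show ?thesis unfolding fa l_def by blast
    next
      assume h: "a \<in> S" "b \<notin> S"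
      then have "b \<in> Wv" using V bu by (simp add: Wv_iff)
      have fa: "f a = Vg a" "f b = Wg b j" using h by (simp_all add: f_def)
      have "(pow2_word (Vg a) (Wg b j) (m {a, b} div 2), pow2_word (Wg b j) (Vg a) (m {a, b} div 2)) \<in> R"
        unfolding cocyc_rels_def using e h j \<open>b \<in> Wv\<close> by blast
      then show ?thesis unfolding fa l_def by blast
    next
      assume h: "a \<notin> S" "b \<in> S"
      then have "a \<in> Wv" using V au by (simp add: Wv_iff)
      have fa: "f a = Wg a j" "f b = Vg b" using h by (simp_all add: f_def)
      have "(pow2_word (Vg b) (Wg a j) (m {b, a} div 2), pow2_word (Wg a j) (Vg b) (m {b, a} div 2)) \<in> R"
        unfolding cocyc_rels_def using eba h j \<open>a \<in> Wv\<close> by blast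
      then show ?thesis unfolding fa l_def mba by blast
    next
      assume h: "a \<notin> S" "b \<notin> S"
      then have w: "a \<in> Wv" "b \<in> Wv" using V au bu by (simp_all add: Wv_iff)
      have fa: "f a = Wg a j" "f b = Wg b j" using h by (simp_all add: f_def)
      have "(pow2_word (Wg a j) (Wg b j) (m {a, b} div 2), pow2_word (Wg b j) (Wg a j) (m {a, b} div 2)) \<in> R"
        unfolding cocyc_rels_def using e w j by blast
      then show ?thesis unfolding fa l_def by blast
    qed
    then show "pres_eqv R (tout j (alt_word a b (m {a, b}))) (tout j (alt_word b a (m {a, b})))
        \<and> tfin j (alt_word a b (m {a, b})) = tfin j (alt_word b a (m {a, b}))"
      unfolding t1 t2 using fin by (auto intro: rel_eqv pres_eqv_sym)
  qed
qed

lemma edge_ok: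
  assumes e: "{a, b} \<in> E"
  shows "ok (alt_word a b (m {a, b})) (alt_word b a (m {a, b}))"
proof -
  consider "a = u" | "b = u" | "a \<noteq> u" "b \<noteq> u" by blast
  then show ?thesis
  proof cases
    case 1
    then show ?thesis using edge_u e by simp
  next
    case 2
    then have "{u, a} \<in> E" "m {a, b} = m {u, a}" using e by (simp_all add: insert_commute)
    then show ?thesis using edge_u[of a] 2 by (simp add: ok_sym)
  next
    case 3
    then show ?thesis using edge_nou e by simp
  qed
qed

lemma ok_ctx: "ok x y \<Longrightarrow> ok (p @ x @ q) (p @ y @ q)"
  unfolding ok_def
proof (intro allI impI)
  fix j assume h: "\<forall>j<k. pres_eqv R (tout j x) (tout j y) \<and> tfin j x = tfin j y" and j: "j < k"
  have j': "tfin j p < k" using tfin_lt j by simp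
  from h[rule_format, OF j'] show "pres_eqv R (tout j (p @ x @ q)) (tout j (p @ y @ q)) \<and> tfin j (p @ x @ q) = tfin j (p @ y @ q)"
    by (simp add: tout_append tfin_append pres_eqv_ctx)
qed

lemma step_ok: "pres_step (artin_rels E m) x y \<Longrightarrow> ok x y"
proof (induction rule: pres_step.induct)
  case (cancel p b x q)
  have "ok [(b, x), (\<not> b, x)] []"
    unfolding ok_def
  proof (intro allI impI)
    fix j assume j: "j < k"
    have "tfin j [(b, x), (\<not> b, x)] = j"
      using j k2 by (auto simp: tss_def)
    moreover have "pres_eqv R (tout j [(b, x), (\<not> b, x)]) []"
      using j k2 pres_eqv_cancel[of R "[]" True Ubar "[]"] pres_eqv_cancel[of R "[]" False Ubar "[]"]
        pres_eqv_cancel[of R "[]" b "Vg x" "[]"] pres_eqv_cancel[of R "[]" b "Wg x j" "[]"]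
      by (auto simp: tso_def tss_def)
    ultimately show "pres_eqv R (tout j [(b, x), (\<not> b, x)]) (tout j []) \<and> tfin j [(b, x), (\<not> b, x)] = tfin j []"
      by simp
  qed
  then show ?case using ok_ctx by fastforce
next
  case (rel r s p q)
  then obtain a b where "r = alt_word a b (m {a, b})" "s = alt_word b a (m {a, b})" "{a, b} \<in> E"
    by (auto simp: artin_rels_def)
  then show ?case using ok_ctx edge_ok by blast
qed

lemma eqv_ok: "pres_eqv (artin_rels E m) x y \<Longrightarrow> ok x y"
  unfolding pres_eqv_def
proof (induction rule: equivclp_induct)
  case base
  then show ?case by (simp add: ok_def)
next
  case (step y z)
  then show ?case using step_ok ok_trans ok_sym by blast
qed

end




context group
begin

lemma inv_cancel_left [simp]: "c \<in> carrier G \<Longrightarrow> z \<in> carrier G \<Longrightarrow> inv c \<otimes> (c \<otimes> z) = z"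
  by (simp add: m_assoc[symmetric])

lemma inv_cancel_left2 [simp]: "c \<in> carrier G \<Longrightarrow> z \<in> carrier G \<Longrightarrow> c \<otimes> (inv c \<otimes> z) = z"
  by (simp add: m_assoc[symmetric])

definition conj :: "'a \<Rightarrow> 'a \<Rightarrow> 'a" where
  "conj c x = c \<otimes> x \<otimes> inv c"

lemma conj_closed [simp]: "c \<in> carrier G \<Longrightarrow> x \<in> carrier G \<Longrightarrow> conj c x \<in> carrier G"
  by (simp add: conj_def)

lemma conj_mult:
  assumes "c \<in> carrier G" "x \<in> carrier G" "y \<in> carrier G"
  shows "conj c x \<otimes> conj c y = conj c (x \<otimes> y)"
  using assms by (simp add: conj_def m_assoc)

lemma conj_pow:
  assumes "c \<in> carrier G" "x \<in> carrier G"
  shows "conj c x [^] (n::nat) = conj c (x [^] n)"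
  using assms
proof (induction n)
  case 0
  then show ?case by (simp add: conj_def)
next
  case (Suc n)
  then show ?case by (simp add: conj_mult)
qed

lemma conj_comm:
  assumes "c \<in> carrier G" "x \<in> carrier G" "c \<otimes> x = x \<otimes> c"
  shows "conj c x = x"
  using assms by (simp add: conj_def m_assoc)

lemma conj_conj:
  assumes "a \<in> carrier G" "b \<in> carrier G" "x \<in> carrier G"
  shows "conj a (conj b x) = conj (a \<otimes> b) x"
  using assms by (simp add: conj_def m_assoc inv_mult_group)

lemma inv_conj:
  assumes "c \<in> carrier G" "x \<in> carrier G"
  shows "inv (conj c x) = conj c (inv x)"
  using assms by (simp add: conj_def m_assoc inv_mult_group)

lemma comm_pow:
  assumes "x \<in> carrier G" "y \<in> carrier G" "x \<otimes> y = y \<otimes> x"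
  shows "x \<otimes> y [^] (n::nat) = y [^] n \<otimes> x"
  using assms
proof (induction n)
  case 0
  then show ?case by simp
next
  case (Suc n)
  have "x \<otimes> y [^] Suc n = (x \<otimes> y [^] n) \<otimes> y" using Suc.prems(1,2) by (simp add: m_assoc)
  also have "\<dots> = (y [^] n \<otimes> x) \<otimes> y" using Suc.IH Suc.prems by simp
  also have "\<dots> = y [^] n \<otimes> (x \<otimes> y)" using Suc by (simp add: m_assoc)
  also have "\<dots> = y [^] n \<otimes> (y \<otimes> x)" using Suc by simp
  also have "\<dots> = y [^] Suc n \<otimes> x" using Suc by (simp add: m_assoc)
  finally show ?case .
qed

lemma comm_inv:
  assumes "x \<in> carrier G" "y \<in> carrier G" "x \<otimes> y = y \<otimes> x"
  shows "inv x \<otimes> y = y \<otimes> inv x"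
proof -
  have "inv x \<otimes> y = inv x \<otimes> ((y \<otimes> x) \<otimes> inv x)" using assms(1,2) by (simp add: m_assoc)
  also have "\<dots> = inv x \<otimes> ((x \<otimes> y) \<otimes> inv x)" using assms by simp
  also have "\<dots> = y \<otimes> inv x" using assms(1,2) by (simp add: m_assoc)
  finally show ?thesis .
qed

lemma shift_pow:
  assumes "x \<in> carrier G" "y \<in> carrier G"
  shows "x \<otimes> (y \<otimes> x) [^] (n::nat) = (x \<otimes> y) [^] n \<otimes> x"
  using assms
proof (induction n)
  case 0
  then show ?case by simp
next
  case (Suc n)
  have "x \<otimes> (y \<otimes> x) [^] Suc n = (x \<otimes> (y \<otimes> x) [^] n) \<otimes> (y \<otimes> x)"
    using Suc.prems by (simp add: m_assoc)
  also have "\<dots> = (x \<otimes> (y \<otimes> x) [^] n) \<otimes> y \<otimes> x" using Suc by (simp add: m_assoc)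
  also have "\<dots> = (x \<otimes> y) [^] n \<otimes> (x \<otimes> y) \<otimes> x" using Suc by (simp add: Suc.IH) (simp add: m_assoc)
  finally show ?case by simp
qed

end




context cocyc
begin

lemma grpA: "group A" using pres by (simp add: presents_def)

sublocale A: group A by (rule grpA)

abbreviation "cgv \<equiv> cocyc_gen_val A gen u k"
abbreviation "H \<equiv> kernel A (integer_mod_group k) \<alpha>"
abbreviation "U \<equiv> gen u"
abbreviation "Ev \<equiv> word_eval A cgv"

lemma genV: "v \<in> V \<Longrightarrow> gen v \<in> carrier A"
  using pres by (auto simp: presents_def)

lemma U_carrier [simp]: "U \<in> carrier A" using genV uV by simp

lemma pres_words: "w1 \<in> lists {p. snd p \<in> V} \<Longrightarrow> w2 \<in> lists {p. snd p \<in> V} \<Longrightarrow>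
   word_eval A gen w1 = word_eval A gen w2 \<longleftrightarrow> pres_eqv (artin_rels E m) w1 w2"
  using pres by (auto simp: presents_def)

lemma artin_eq:
  assumes e: "{a, b} \<in> E"
  shows "(gen a \<otimes>\<^bsub>A\<^esub> gen b) [^]\<^bsub>A\<^esub> (m {a, b} div 2) = (gen b \<otimes>\<^bsub>A\<^esub> gen a) [^]\<^bsub>A\<^esub> (m {a, b} div 2)"
proof -
  from edge_props[OF e] have V: "a \<in> V" "b \<in> V" and M: "m {a, b} = 2 * (m {a, b} div 2)" by auto
  have r: "(alt_word a b (m {a, b}), alt_word b a (m {a, b})) \<in> artin_rels E m"
    unfolding artin_rels_def using e by blast
  have "pres_eqv (artin_rels E m) (alt_word a b (m {a, b})) (alt_word b a (m {a, b}))"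
    using pres_eqv_rel[OF r, of "[]" "[]"] by simp
  moreover have "alt_word a b n \<in> lists {p. snd p \<in> V}" "alt_word b a n \<in> lists {p. snd p \<in> V}" for n
    using V by (auto simp: alt_word_def)
  ultimately have "word_eval A gen (alt_word a b (m {a, b})) = word_eval A gen (alt_word b a (m {a, b}))"
    using pres_words by blast
  then show ?thesis using M V
    by (metis alt_pow2 A.word_eval_pow2 genV)
qed

lemma comm_S: "v \<in> S \<Longrightarrow> U \<otimes>\<^bsub>A\<^esub> gen v = gen v \<otimes>\<^bsub>A\<^esub> U"
  using artin_eq[of u v] S_props[of v] genV[of v] by simp

lemma ghom: "group_hom A (integer_mod_group k) \<alpha>"
  using hom grpA by (simp add: group_hom_def group_hom_axioms_def)

lemma subH: "subgroup H A"
  using group_hom.subgroup_kernel[OF ghom] .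

lemma normH: "H \<lhd> A"
  using group_hom.normal_kernel[OF ghom] .

lemma alpha_pow: "\<alpha> (U [^]\<^bsub>A\<^esub> (n::nat)) = int n mod int k"
  using hom_nat_pow[OF hom U_carrier grpA group_integer_mod_group, of n] au by simp

lemma cgv_simps [simp]:
  "cgv Ubar = U [^]\<^bsub>A\<^esub> k"
  "cgv (Vg v) = gen v"
  "cgv (Wg w i) = A.conj (U [^]\<^bsub>A\<^esub> i) (gen w)"
  by (simp_all add: cocyc_gen_val_def A.conj_def)

lemma Xs_cases: "x \<in> Xs \<longleftrightarrow> x = Ubar \<or> (\<exists>v. x = Vg v \<and> v \<in> S) \<or> (\<exists>w i. x = Wg w i \<and> w \<in> Wv \<and> i < k)"
  by (auto simp: cocyc_gens_def)

lemma cgv_H: "x \<in> Xs \<Longrightarrow> cgv x \<in> H"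
proof -
  assume x: "x \<in> Xs"
  have kU: "U [^]\<^bsub>A\<^esub> k \<in> H" using alpha_pow[of k] by (simp add: kernel_def)
  have gv: "v \<in> V \<Longrightarrow> v \<noteq> u \<Longrightarrow> gen v \<in> H" for v using av genV by (simp add: kernel_def)
  show ?thesis
    using x unfolding Xs_cases
  proof (elim disjE exE conjE)
    assume "x = Ubar" then show ?thesis using kU by simp
  next
    fix v assume "x = Vg v" "v \<in> S" then show ?thesis using gv S_props by simp
  next
    fix w i assume "x = Wg w i" "w \<in> Wv" "i < k"
    then show ?thesis using gv[of w] normal.inv_op_closed2[OF normH, of "U [^]\<^bsub>A\<^esub> i" "gen w"]
      by (simp add: Wv_iff A.conj_def)
  qed
qed

lemma H_carrier: "H \<subseteq> carrier A" by (auto simp: kernel_def)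

lemma cgv_carrier: "x \<in> Xs \<Longrightarrow> cgv x \<in> carrier A"
  using cgv_H H_carrier by blast

lemma Ev_append: "c1 \<in> lists {p. snd p \<in> Xs} \<Longrightarrow> c2 \<in> lists {p. snd p \<in> Xs} \<Longrightarrow> Ev (c1 @ c2) = Ev c1 \<otimes>\<^bsub>A\<^esub> Ev c2"
  by (rule A.word_eval_append) (auto intro: cgv_carrier)

lemma Ev_closed: "c \<in> lists {p. snd p \<in> Xs} \<Longrightarrow> Ev c \<in> carrier A"
  by (rule A.word_eval_closed) (auto intro: cgv_carrier)

lemma evalG:
  "c \<in> lists {p. snd p \<in> Xs} \<Longrightarrow> word_eval (A\<lparr>carrier := H\<rparr>) cgv c = Ev c"
proof (induction c)
  case Nil
  then show ?case by simp
next
  case (Cons a c)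
  obtain b x where a: "a = (b, x)" by (cases a)
  then have "cgv x \<in> H" using Cons cgv_H by auto
  then show ?case using Cons a A.m_inv_consistent[OF subH] by simp
qed

end




context cocyc
begin

lemma Wj_Xs: "w \<in> Wv \<Longrightarrow> Wj_word k w j \<in> lists {p. snd p \<in> Xs}"
  using k_pos by (auto simp: Wj_word_def cocyc_gens_def)

lemma Wseq_Xs: "w \<in> Wv \<Longrightarrow> Wseq w a l \<in> lists {p. snd p \<in> Xs}"
  by (induction l) (simp_all add: Wseq_Suc Wj_Xs, simp add: Wseq_def)

lemma pow2_Xs: "x \<in> Xs \<Longrightarrow> y \<in> Xs \<Longrightarrow> pow2_word x y l \<in> lists {p. snd p \<in> Xs}"
  by (induction l) (simp_all add: pow2_Suc_end, simp add: pow2_word_def)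

lemma Xs_Ubar [simp]: "Ubar \<in> Xs" by (simp add: cocyc_gens_def)
lemma Xs_Vg: "v \<in> S \<Longrightarrow> Vg v \<in> Xs" by (simp add: cocyc_gens_def)
lemma Xs_Wg: "w \<in> Wv \<Longrightarrow> i < k \<Longrightarrow> Wg w i \<in> Xs" by (simp add: cocyc_gens_def)

lemma Ev_rep_T: "Ev (replicate n (True, Ubar)) = (U [^]\<^bsub>A\<^esub> k) [^]\<^bsub>A\<^esub> n"
  using A.word_eval_rep_T[of cgv Ubar n] by simp

lemma Ev_rep_F: "Ev (replicate n (False, Ubar)) = inv\<^bsub>A\<^esub> ((U [^]\<^bsub>A\<^esub> k) [^]\<^bsub>A\<^esub> n)"
  using A.word_eval_rep_F[of cgv Ubar n] by simp

lemma Wj_eval: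
  assumes w: "w \<in> Wv"
  shows "Ev (Wj_word k w j) = A.conj (U [^]\<^bsub>A\<^esub> j) (gen w)"
proof -
  define q where "q = j div k"
  define s where "s = j mod k"
  have sk: "s < k" using k_pos by (simp add: s_def)
  have gw: "gen w \<in> carrier A" using w genV by (simp add: Wv_iff)
  have l1: "replicate q (True, Ubar) \<in> lists {p. snd p \<in> Xs}" "replicate q (False, Ubar) \<in> lists {p. snd p \<in> Xs}"
    "[(True, Wg w s)] \<in> lists {p. snd p \<in> Xs}" using Xs_Wg[OF w sk] by auto
  have "Ev (Wj_word k w j) = Ev (replicate q (True, Ubar)) \<otimes>\<^bsub>A\<^esub> (Ev [(True, Wg w s)] \<otimes>\<^bsub>A\<^esub> Ev (replicate q (False, Ubar)))"
  proof -
    have "Wj_word k w j = replicate q (True, Ubar) @ ([(True, Wg w s)] @ replicate q (False, Ubar))"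
      by (simp add: Wj_word_def q_def s_def)
    moreover have "[(True, Wg w s)] @ replicate q (False, Ubar) \<in> lists {p. snd p \<in> Xs}"
      using l1 by (simp only: append_in_lists_conv)
    ultimately show ?thesis using Ev_append[OF l1(1)] Ev_append[OF l1(3) l1(2)] by metis
  qed
  also have "\<dots> = (U [^]\<^bsub>A\<^esub> k) [^]\<^bsub>A\<^esub> q \<otimes>\<^bsub>A\<^esub> (A.conj (U [^]\<^bsub>A\<^esub> s) (gen w) \<otimes>\<^bsub>A\<^esub> inv\<^bsub>A\<^esub> ((U [^]\<^bsub>A\<^esub> k) [^]\<^bsub>A\<^esub> q))"
    using gw by (simp add: Ev_rep_T Ev_rep_F)
  also have "\<dots> = A.conj ((U [^]\<^bsub>A\<^esub> k) [^]\<^bsub>A\<^esub> q) (A.conj (U [^]\<^bsub>A\<^esub> s) (gen w))"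
    using gw by (simp add: A.conj_def A.m_assoc)
  also have "\<dots> = A.conj (U [^]\<^bsub>A\<^esub> (k * q) \<otimes>\<^bsub>A\<^esub> U [^]\<^bsub>A\<^esub> s) (gen w)"
    using gw by (simp add: A.conj_conj A.nat_pow_pow)
  also have "U [^]\<^bsub>A\<^esub> (k * q) \<otimes>\<^bsub>A\<^esub> U [^]\<^bsub>A\<^esub> s = U [^]\<^bsub>A\<^esub> j"
    by (simp add: A.nat_pow_mult q_def s_def)
  finally show ?thesis .
qed

lemma Wseq_eval:
  assumes w: "w \<in> Wv"
  shows "Ev (Wseq w a l) \<otimes>\<^bsub>A\<^esub> U [^]\<^bsub>A\<^esub> (a + l) = U [^]\<^bsub>A\<^esub> a \<otimes>\<^bsub>A\<^esub> (gen w \<otimes>\<^bsub>A\<^esub> U) [^]\<^bsub>A\<^esub> l"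
proof (induction l)
  case 0
  then show ?case by (simp add: Wseq_def)
next
  case (Suc l)
  have gw: "gen w \<in> carrier A" using w genV by (simp add: Wv_iff)
  have X: "Ev (Wseq w a l) \<in> carrier A" using Ev_closed Wseq_Xs w by blast
  define c where "c = U [^]\<^bsub>A\<^esub> (a + l)"
  have c: "c \<in> carrier A" by (simp add: c_def)
  have "Ev (Wseq w a (Suc l)) \<otimes>\<^bsub>A\<^esub> U [^]\<^bsub>A\<^esub> (a + Suc l) = Ev (Wseq w a l) \<otimes>\<^bsub>A\<^esub> A.conj c (gen w) \<otimes>\<^bsub>A\<^esub> (c \<otimes>\<^bsub>A\<^esub> U)"
    unfolding Wseq_Suc using Ev_append[OF Wseq_Xs[OF w] Wj_Xs[OF w]] Wj_eval[OF w] by (simp add: c_def)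
  also have "\<dots> = (Ev (Wseq w a l) \<otimes>\<^bsub>A\<^esub> c) \<otimes>\<^bsub>A\<^esub> (gen w \<otimes>\<^bsub>A\<^esub> U)"
    using X c gw by (simp add: A.conj_def A.m_assoc)
  also have "\<dots> = (U [^]\<^bsub>A\<^esub> a \<otimes>\<^bsub>A\<^esub> (gen w \<otimes>\<^bsub>A\<^esub> U) [^]\<^bsub>A\<^esub> l) \<otimes>\<^bsub>A\<^esub> (gen w \<otimes>\<^bsub>A\<^esub> U)"
    using Suc.IH by (simp add: c_def)
  also have "\<dots> = U [^]\<^bsub>A\<^esub> a \<otimes>\<^bsub>A\<^esub> (gen w \<otimes>\<^bsub>A\<^esub> U) [^]\<^bsub>A\<^esub> Suc l"
    using gw by (simp add: A.m_assoc)
  finally show ?case .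
qed

lemma rel_sound:
  assumes r: "(r, s) \<in> R"
  shows "Ev r = Ev s"
proof -
  from r consider
      (R1) v where "v \<in> S" "r = [(True, Vg v), (True, Ubar)]" "s = [(True, Ubar), (True, Vg v)]"
    | (R2) v v' where "v \<in> S" "v' \<in> S" "{v, v'} \<in> E"
        "r = pow2_word (Vg v) (Vg v') (m {v, v'} div 2)" "s = pow2_word (Vg v') (Vg v) (m {v, v'} div 2)"
    | (R3) v w i where "v \<in> S" "w \<in> Wv" "{v, w} \<in> E" "i < k"
        "r = pow2_word (Vg v) (Wg w i) (m {v, w} div 2)" "s = pow2_word (Wg w i) (Vg v) (m {v, w} div 2)"
    | (R4) w w' i where "w \<in> Wv" "w' \<in> Wv" "{w, w'} \<in> E" "i < k"
        "r = pow2_word (Wg w i) (Wg w' i) (m {w, w'} div 2)" "s = pow2_word (Wg w' i) (Wg w i) (m {w, w'} div 2)"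
    | (RB) w i where "w \<in> Wv" "{u, w} \<in> E" "i < k"
        "r = Wseq w i (m {u, w} div 2)" "s = Wseq w (i + 1) (m {u, w} div 2)"
    unfolding cocyc_rels_def Wseq_def by blast
  then show ?thesis
  proof cases
    case R1
    have gv: "gen v \<in> carrier A" using R1 S_props genV by blast
    have "gen v \<otimes>\<^bsub>A\<^esub> U [^]\<^bsub>A\<^esub> k = U [^]\<^bsub>A\<^esub> k \<otimes>\<^bsub>A\<^esub> gen v"
      using A.comm_pow[OF gv U_carrier] comm_S[OF R1(1)] by simp
    then show ?thesis using R1 gv by simp
  next
    case R2
    have g: "gen v \<in> carrier A" "gen v' \<in> carrier A" using R2 S_props genV by blast+
    show ?thesis using R2 g artin_eq[OF R2(3)] by (simp add: A.word_eval_pow2)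
  next
    case R3
    have g: "gen v \<in> carrier A" "gen w \<in> carrier A" using R3 S_props genV Wv_iff by blast+
    define c where "c = U [^]\<^bsub>A\<^esub> i"
    have c: "c \<in> carrier A" by (simp add: c_def)
    have cv: "A.conj c (gen v) = gen v"
      using A.comm_pow[OF g(1) U_carrier] comm_S[OF R3(1)] g c
      by (intro A.conj_comm) (simp_all add: c_def)
    have "Ev r = (A.conj c (gen v) \<otimes>\<^bsub>A\<^esub> A.conj c (gen w)) [^]\<^bsub>A\<^esub> (m {v, w} div 2)"
      using R3 g c cv by (simp add: A.word_eval_pow2 c_def)
    also have "\<dots> = A.conj c ((gen v \<otimes>\<^bsub>A\<^esub> gen w) [^]\<^bsub>A\<^esub> (m {v, w} div 2))"
      using g c by (simp add: A.conj_mult A.conj_pow)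
    also have "\<dots> = A.conj c ((gen w \<otimes>\<^bsub>A\<^esub> gen v) [^]\<^bsub>A\<^esub> (m {v, w} div 2))"
      using artin_eq[OF R3(3)] by simp
    also have "\<dots> = (A.conj c (gen w) \<otimes>\<^bsub>A\<^esub> A.conj c (gen v)) [^]\<^bsub>A\<^esub> (m {v, w} div 2)"
      using g c by (simp add: A.conj_mult A.conj_pow)
    also have "\<dots> = Ev s"
      using R3 g c cv by (simp add: A.word_eval_pow2 c_def)
    finally show ?thesis .
  next
    case R4
    have g: "gen w \<in> carrier A" "gen w' \<in> carrier A" using R4 genV Wv_iff by blast+
    define c where "c = U [^]\<^bsub>A\<^esub> i"
    have c: "c \<in> carrier A" by (simp add: c_def)
    have "Ev r = (A.conj c (gen w) \<otimes>\<^bsub>A\<^esub> A.conj c (gen w')) [^]\<^bsub>A\<^esub> (m {w, w'} div 2)"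
      using R4 g c by (simp add: A.word_eval_pow2 c_def)
    also have "\<dots> = A.conj c ((gen w \<otimes>\<^bsub>A\<^esub> gen w') [^]\<^bsub>A\<^esub> (m {w, w'} div 2))"
      using g c by (simp add: A.conj_mult A.conj_pow)
    also have "\<dots> = A.conj c ((gen w' \<otimes>\<^bsub>A\<^esub> gen w) [^]\<^bsub>A\<^esub> (m {w, w'} div 2))"
      using artin_eq[OF R4(3)] by simp
    also have "\<dots> = (A.conj c (gen w') \<otimes>\<^bsub>A\<^esub> A.conj c (gen w)) [^]\<^bsub>A\<^esub> (m {w, w'} div 2)"
      using g c by (simp add: A.conj_mult A.conj_pow)
    also have "\<dots> = Ev s"
      using R4 g c by (simp add: A.word_eval_pow2 c_def)
    finally show ?thesis .
  next
    case RB
    define l where "l = m {u, w} div 2"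
    have gw: "gen w \<in> carrier A" using RB genV Wv_iff by blast
    have X1: "Ev r \<in> carrier A" "Ev s \<in> carrier A" using RB Ev_closed Wseq_Xs by auto
    have e1: "Ev r \<otimes>\<^bsub>A\<^esub> U [^]\<^bsub>A\<^esub> (i + l) = U [^]\<^bsub>A\<^esub> i \<otimes>\<^bsub>A\<^esub> (gen w \<otimes>\<^bsub>A\<^esub> U) [^]\<^bsub>A\<^esub> l"
      using Wseq_eval[OF RB(1), of i l] RB by (simp add: l_def)
    have e2: "Ev s \<otimes>\<^bsub>A\<^esub> U [^]\<^bsub>A\<^esub> (i + 1 + l) = U [^]\<^bsub>A\<^esub> (i + 1) \<otimes>\<^bsub>A\<^esub> (gen w \<otimes>\<^bsub>A\<^esub> U) [^]\<^bsub>A\<^esub> l"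
      using Wseq_eval[OF RB(1), of "i + 1" l] RB by (simp add: l_def)
    have ae: "(U \<otimes>\<^bsub>A\<^esub> gen w) [^]\<^bsub>A\<^esub> l = (gen w \<otimes>\<^bsub>A\<^esub> U) [^]\<^bsub>A\<^esub> l"
      using artin_eq[OF RB(2)] by (simp add: l_def)
    have "Ev s \<otimes>\<^bsub>A\<^esub> (U [^]\<^bsub>A\<^esub> (i + l) \<otimes>\<^bsub>A\<^esub> U) = Ev s \<otimes>\<^bsub>A\<^esub> U [^]\<^bsub>A\<^esub> (i + 1 + l)"
      by simp
    also have "\<dots> = U [^]\<^bsub>A\<^esub> i \<otimes>\<^bsub>A\<^esub> (U \<otimes>\<^bsub>A\<^esub> (gen w \<otimes>\<^bsub>A\<^esub> U) [^]\<^bsub>A\<^esub> l)"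
      unfolding e2 using gw by (simp add: A.m_assoc)
    also have "\<dots> = U [^]\<^bsub>A\<^esub> i \<otimes>\<^bsub>A\<^esub> ((gen w \<otimes>\<^bsub>A\<^esub> U) [^]\<^bsub>A\<^esub> l \<otimes>\<^bsub>A\<^esub> U)"
      using A.shift_pow[OF U_carrier gw, of l] ae by simp
    also have "\<dots> = Ev r \<otimes>\<^bsub>A\<^esub> (U [^]\<^bsub>A\<^esub> (i + l) \<otimes>\<^bsub>A\<^esub> U)"
      using e1 X1 gw by (simp add: A.m_assoc[symmetric])
    finally show ?thesis using X1 by simp
  qed
qed

end




context cocyc
begin

lemma tso_Xs: "s < k \<Longrightarrow> x \<in> V \<Longrightarrow> tso s (b, x) \<in> lists {p. snd p \<in> Xs}"
  by (auto simp: tso_def Xs_Vg Xs_Wg Wv_iff)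

lemma tout_Xs: "s < k \<Longrightarrow> w \<in> lists {p. snd p \<in> V} \<Longrightarrow> tout s w \<in> lists {p. snd p \<in> Xs}"
proof (induction w arbitrary: s)
  case Nil
  then show ?case by simp
next
  case (Cons a w)
  obtain b x where a: "a = (b, x)" by (cases a)
  then show ?case using Cons tso_Xs[of s x b] tss_lt[of s a] by simp
qed

lemma K:
  assumes s: "s < k" and x: "x \<in> V"
  shows "Ev (tso s (b, x)) \<otimes>\<^bsub>A\<^esub> U [^]\<^bsub>A\<^esub> (tss s (b, x)) = U [^]\<^bsub>A\<^esub> s \<otimes>\<^bsub>A\<^esub> (if b then gen x else inv\<^bsub>A\<^esub> (gen x))"
proof -
  have gx: "gen x \<in> carrier A" using x genV by simp
  consider "x = u" | "x \<noteq> u" "x \<in> S" | "x \<noteq> u" "x \<notin> S" by blast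
  then show ?thesis
  proof cases
    case 1
    show ?thesis
    proof (cases b)
      case True
      then show ?thesis using 1 by (auto simp: tso_def tss_def)
    next
      case False
      show ?thesis
      proof (cases "s = 0")
        case True
        have kk: "k = Suc (k - 1)" using k_pos by simp
        have "U [^]\<^bsub>A\<^esub> k = U [^]\<^bsub>A\<^esub> (k - 1) \<otimes>\<^bsub>A\<^esub> U" by (subst kk) simp
        then have "inv\<^bsub>A\<^esub> (U [^]\<^bsub>A\<^esub> k) = inv\<^bsub>A\<^esub> U \<otimes>\<^bsub>A\<^esub> inv\<^bsub>A\<^esub> (U [^]\<^bsub>A\<^esub> (k - 1))"
          by (simp add: A.inv_mult_group)
        then show ?thesis using 1 False True by (simp add: tso_def tss_def A.m_assoc)
      next
        case ss: False
        have kk: "s = Suc (s - 1)" using ss by simp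
        have "U [^]\<^bsub>A\<^esub> s = U [^]\<^bsub>A\<^esub> (s - 1) \<otimes>\<^bsub>A\<^esub> U" by (subst kk) simp
        then show ?thesis using 1 False ss by (simp add: tso_def tss_def A.m_assoc)
      qed
    qed
  next
    case 2
    have c1: "gen x \<otimes>\<^bsub>A\<^esub> U [^]\<^bsub>A\<^esub> s = U [^]\<^bsub>A\<^esub> s \<otimes>\<^bsub>A\<^esub> gen x"
      using A.comm_pow[OF gx U_carrier] comm_S[OF 2(2)] by simp
    have c2: "inv\<^bsub>A\<^esub> (gen x) \<otimes>\<^bsub>A\<^esub> U [^]\<^bsub>A\<^esub> s = U [^]\<^bsub>A\<^esub> s \<otimes>\<^bsub>A\<^esub> inv\<^bsub>A\<^esub> (gen x)"
      using A.comm_inv[OF gx _ c1] by simp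
    show ?thesis using 2 c1 c2 gx by (auto simp: tso_def tss_def)
  next
    case 3
    have "A.conj (U [^]\<^bsub>A\<^esub> s) y \<otimes>\<^bsub>A\<^esub> U [^]\<^bsub>A\<^esub> s = U [^]\<^bsub>A\<^esub> s \<otimes>\<^bsub>A\<^esub> y" if "y \<in> carrier A" for y
      using that by (simp add: A.conj_def A.m_assoc)
    then show ?thesis using 3 gx by (auto simp: tso_def tss_def A.inv_conj)
  qed
qed

lemma L:
  "s < k \<Longrightarrow> w \<in> lists {p. snd p \<in> V} \<Longrightarrow>
    Ev (tout s w) \<otimes>\<^bsub>A\<^esub> U [^]\<^bsub>A\<^esub> (tfin s w) = U [^]\<^bsub>A\<^esub> s \<otimes>\<^bsub>A\<^esub> word_eval A gen w"
proof (induction w arbitrary: s)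
  case Nil
  then show ?case by simp
next
  case (Cons a w)
  obtain b x where a: "a = (b, x)" by (cases a)
  have x: "x \<in> V" "w \<in> lists {p. snd p \<in> V}" using Cons a by auto
  define s' where "s' = tss s (b, x)"
  have s': "s' < k" using tss_lt Cons by (simp add: s'_def)
  have l1: "tso s (b, x) \<in> lists {p. snd p \<in> Xs}" using tso_Xs Cons x by simp
  have l2: "tout s' w \<in> lists {p. snd p \<in> Xs}" using tout_Xs s' x by simp
  have c1: "Ev (tso s (b, x)) \<in> carrier A" "Ev (tout s' w) \<in> carrier A" using Ev_closed l1 l2 by auto
  have gx: "gen x \<in> carrier A" "word_eval A gen w \<in> carrier A"
    using genV x by (auto intro!: A.word_eval_closed)
  have "Ev (tout s (a # w)) \<otimes>\<^bsub>A\<^esub> U [^]\<^bsub>A\<^esub> (tfin s (a # w))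
      = Ev (tso s (b, x)) \<otimes>\<^bsub>A\<^esub> (Ev (tout s' w) \<otimes>\<^bsub>A\<^esub> U [^]\<^bsub>A\<^esub> (tfin s' w))"
    using Ev_append[OF l1 l2] c1 by (simp add: a s'_def A.m_assoc)
  also have "\<dots> = (Ev (tso s (b, x)) \<otimes>\<^bsub>A\<^esub> U [^]\<^bsub>A\<^esub> s') \<otimes>\<^bsub>A\<^esub> word_eval A gen w"
    using Cons.IH[OF s' x(2)] c1 gx by (simp add: A.m_assoc)
  also have "\<dots> = U [^]\<^bsub>A\<^esub> s \<otimes>\<^bsub>A\<^esub> word_eval A gen (a # w)"
    using K[OF Cons.prems(1) x(1), of b] gx by (simp add: s'_def a A.m_assoc)
  finally show ?case .
qed

end




context cocyc
begin

fun rhol :: "bool \<times> 'v cletter \<Rightarrow> 'v word" where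
  "rhol (b, Ubar) = replicate k (b, u)"
| "rhol (b, Vg v) = [(b, v)]"
| "rhol (b, Wg w i) = replicate i (True, u) @ [(b, w)] @ replicate i (False, u)"

definition rho :: "'v cletter word \<Rightarrow> 'v word" where
  "rho c = concat (map rhol c)"

lemma rhol_V: "snd p \<in> Xs \<Longrightarrow> rhol p \<in> lists {p. snd p \<in> V}"
  using uV by (cases p) (auto simp: Xs_cases Wv_iff dest: S_props)

lemma rho_V: "c \<in> lists {p. snd p \<in> Xs} \<Longrightarrow> rho c \<in> lists {p. snd p \<in> V}"
  apply (induction c) apply (simp add: rho_def) apply (simp add: rho_def)
  using rhol_V by (metis prod.collapse)

lemma rhol_eval_W: assumes h: "w \<in> Wv" "i < k" shows "word_eval A gen (rhol (b, Wg w i)) = Ev [(b, Wg w i)]"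
proof -
    have gw: "gen w \<in> carrier A" using genV h(1) by (simp add: Wv_iff)
    have l: "replicate i (True, u) \<in> lists {p. snd p \<in> V}" "[(b, w)] @ replicate i (False, u) \<in> lists {p. snd p \<in> V}"
       "[(b, w)] \<in> lists {p. snd p \<in> V}" "replicate i (False, u) \<in> lists {p. snd p \<in> V}"
      using uV h(1) by (auto simp: Wv_iff)
    have cond: "\<forall>p\<in>set xs. gen (snd p) \<in> carrier A" if "xs \<in> lists {p. snd p \<in> V}" for xs
      using that genV by auto
    have "word_eval A gen (rhol (b, Wg w i)) = word_eval A gen (replicate i (True, u)) \<otimes>\<^bsub>A\<^esub>
        (word_eval A gen [(b, w)] \<otimes>\<^bsub>A\<^esub> word_eval A gen (replicate i (False, u)))"
      unfolding rhol.simps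
      using A.word_eval_append[OF cond[OF l(1)] cond[OF l(2)]] A.word_eval_append[OF cond[OF l(3)] cond[OF l(4)]]
      by simp
    also have "\<dots> = U [^]\<^bsub>A\<^esub> i \<otimes>\<^bsub>A\<^esub> ((if b then gen w else inv\<^bsub>A\<^esub> (gen w)) \<otimes>\<^bsub>A\<^esub> inv\<^bsub>A\<^esub> (U [^]\<^bsub>A\<^esub> i))"
      using gw by (simp add: A.word_eval_rep_T A.word_eval_rep_F)
    also have "\<dots> = Ev [(b, Wg w i)]"
    proof (cases b)
      case True
      then show ?thesis using h gw by (simp add: A.conj_def A.m_assoc)
    next
      case False
      then show ?thesis using h gw by (simp add: A.inv_conj) (simp add: A.conj_def A.m_assoc)
    qed
    finally show ?thesis .
qed


lemma Xs_cases2: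
  assumes "x \<in> Xs"
  obtains "x = Ubar" | v where "x = Vg v" "v \<in> S" | w i where "x = Wg w i" "w \<in> Wv" "i < k"
  using assms by (auto simp: Xs_cases)

lemma rhol_eval0: "x \<in> Xs \<Longrightarrow> word_eval A gen (rhol (b, x)) = Ev [(b, x)]"
proof (erule Xs_cases2)
  assume "x = Ubar" then show ?thesis
    by (cases b) (simp_all add: A.word_eval_rep_T A.word_eval_rep_F)
next
  fix v assume "x = Vg v" "v \<in> S" then show ?thesis using S_props genV by auto
next
  fix w i assume "x = Wg w i" "w \<in> Wv" "i < k" then show ?thesis using rhol_eval_W by simp
qed

lemma rhol_eval: "snd p \<in> Xs \<Longrightarrow> word_eval A gen (rhol p) = Ev [p]"
  using rhol_eval0 by (cases p) auto

lemma rho_eval: "c \<in> lists {p. snd p \<in> Xs} \<Longrightarrow> word_eval A gen (rho c) = Ev c"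
proof (induction c)
  case Nil
  then show ?case by (simp add: rho_def)
next
  case (Cons p c)
  have "rho (p # c) = rhol p @ rho c" by (simp add: rho_def)
  moreover have "word_eval A gen (rhol p @ rho c) = word_eval A gen (rhol p) \<otimes>\<^bsub>A\<^esub> word_eval A gen (rho c)"
    using rhol_V[of p] rho_V[of c] Cons genV by (intro A.word_eval_append) auto
  moreover have "Ev (p # c) = Ev [p] \<otimes>\<^bsub>A\<^esub> Ev c"
    using Ev_append[of "[p]" c] Cons by simp
  ultimately show ?case using Cons rhol_eval by simp
qed

lemma tout_rhol0: "x \<in> Xs \<Longrightarrow> tout 0 (rhol (b, x)) = [(b, x)] \<and> tfin 0 (rhol (b, x)) = 0"
proof (erule Xs_cases2)
  obtain k' where kk: "k = Suc k'" using k_pos not0_implies_Suc by blast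
  assume x: "x = Ubar"
  show ?thesis
  proof (cases b)
    case True
    have "replicate k (True, u) = replicate k' (True, u) @ [(True, u)]"
      by (simp add: kk replicate_append_same)
    moreover have "k' < k" "Suc k' = k" using kk by simp_all
    ultimately show ?thesis using x True tout_repT[of 0 k']
      by (simp add: tout_append tfin_append tso_def tss_def)
  next
    case False
    have "replicate k (False, u) = (False, u) # replicate k' (False, u)"
      by (simp add: kk)
    moreover have "k - 1 = k'" using kk by simp
    ultimately show ?thesis using x False tout_repF[of k' k']
      by (simp add: tso_def tss_def)
  qed
next
  fix v assume "x = Vg v" "v \<in> S" then show ?thesis using S_props[of v] by (simp add: tso_def tss_def)
next
  fix w i assume h: "x = Wg w i" "w \<in> Wv" "i < k"
  have w: "w \<noteq> u" "w \<notin> S" using h(2) by (simp_all add: Wv_iff)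
  show ?thesis using tout_repT[of 0 i] tout_repF[of i i] h(1,3) w
    by (simp add: tout_append tfin_append tso_def tss_def)
qed

lemma tout_rhol: "snd p \<in> Xs \<Longrightarrow> tout 0 (rhol p) = [p] \<and> tfin 0 (rhol p) = 0"
  using tout_rhol0 by (cases p) auto

lemma tout_rho: "c \<in> lists {p. snd p \<in> Xs} \<Longrightarrow> tout 0 (rho c) = c \<and> tfin 0 (rho c) = 0"
proof (induction c)
  case Nil
  then show ?case by (simp add: rho_def)
next
  case (Cons p c)
  have "rho (p # c) = rhol p @ rho c" by (simp add: rho_def)
  then show ?case using Cons tout_rhol[of p] by (simp add: tout_append tfin_append)
qed

end




context cocyc
begin

lemma R_Xs:
  assumes r: "(r, s) \<in> R"
  shows "r \<in> lists {p. snd p \<in> Xs} \<and> s \<in> lists {p. snd p \<in> Xs}"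
proof -
  from r consider
      (R1) v where "v \<in> S" "r = [(True, Vg v), (True, Ubar)]" "s = [(True, Ubar), (True, Vg v)]"
    | (R2) v v' where "v \<in> S" "v' \<in> S" "{v, v'} \<in> E"
        "r = pow2_word (Vg v) (Vg v') (m {v, v'} div 2)" "s = pow2_word (Vg v') (Vg v) (m {v, v'} div 2)"
    | (R3) v w i where "v \<in> S" "w \<in> Wv" "{v, w} \<in> E" "i < k"
        "r = pow2_word (Vg v) (Wg w i) (m {v, w} div 2)" "s = pow2_word (Wg w i) (Vg v) (m {v, w} div 2)"
    | (R4) w w' i where "w \<in> Wv" "w' \<in> Wv" "{w, w'} \<in> E" "i < k"
        "r = pow2_word (Wg w i) (Wg w' i) (m {w, w'} div 2)" "s = pow2_word (Wg w' i) (Wg w i) (m {w, w'} div 2)"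
    | (RB) w i where "w \<in> Wv" "{u, w} \<in> E" "i < k"
        "r = Wseq w i (m {u, w} div 2)" "s = Wseq w (i + 1) (m {u, w} div 2)"
    unfolding cocyc_rels_def Wseq_def by blast
  then show ?thesis
  proof cases
    case R1 then show ?thesis by (simp add: Xs_Vg)
  next
    case R2 then show ?thesis by (simp add: Xs_Vg pow2_Xs)
  next
    case R3 then show ?thesis by (simp add: Xs_Vg Xs_Wg pow2_Xs)
  next
    case R4 then show ?thesis by (simp add: Xs_Wg pow2_Xs)
  next
    case RB then show ?thesis by (simp add: Wseq_Xs)
  qed
qed

definition F :: "'v cletter word \<Rightarrow> 'v cletter word" where
  "F c = filter (\<lambda>p. snd p \<in> Xs) c"

lemma F_Xs [simp]: "F c \<in> lists {p. snd p \<in> Xs}"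
  by (auto simp: F_def)

lemma F_id: "c \<in> lists {p. snd p \<in> Xs} \<Longrightarrow> F c = c"
  by (induction c) (auto simp: F_def)

lemma F_append: "F (x @ y) = F x @ F y" by (simp add: F_def)

lemma Ev3: "Ev (F p @ c @ F q) = Ev (F p) \<otimes>\<^bsub>A\<^esub> (Ev c \<otimes>\<^bsub>A\<^esub> Ev (F q))" if "c \<in> lists {p. snd p \<in> Xs}"
  using that Ev_append by (simp add: Ev_append)

lemma step_sound: "pres_step R x y \<Longrightarrow> Ev (F x) = Ev (F y)"
proof (induction rule: pres_step.induct)
  case (cancel p b x q)
  show ?case
  proof (cases "x \<in> Xs")
    case True
    have c: "cgv x \<in> carrier A" using cgv_carrier True by simp
    have l: "[(b, x), (\<not> b, x)] \<in> lists {p. snd p \<in> Xs}" using True by simp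
    have e: "Ev [(b, x), (\<not> b, x)] = \<one>\<^bsub>A\<^esub>" using c by (cases b) simp_all
    have "F (p @ [(b, x), (\<not> b, x)] @ q) = F p @ [(b, x), (\<not> b, x)] @ F q"
      using True by (simp add: F_def)
    then show ?thesis using Ev3[OF l, of p q] e Ev_closed[OF F_Xs[of q]] Ev_append[OF F_Xs[of p] F_Xs[of q]]
      by (simp add: F_append)
  next
    case False
    then show ?thesis by (simp add: F_def)
  qed
next
  case (rel r s p q)
  from R_Xs[OF rel] have l: "r \<in> lists {p. snd p \<in> Xs}" "s \<in> lists {p. snd p \<in> Xs}" by auto
  show ?case using Ev3[OF l(1), of p q] Ev3[OF l(2), of p q] rel_sound[OF rel]
    by (simp add: F_append F_id[OF l(1)] F_id[OF l(2)])
qed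

lemma eqv_sound: "pres_eqv R x y \<Longrightarrow> Ev (F x) = Ev (F y)"
  unfolding pres_eqv_def
proof (induction rule: equivclp_induct)
  case base
  then show ?case by simp
next
  case (step y z)
  then show ?case using step_sound by metis
qed

lemma grpG: "group (A\<lparr>carrier := H\<rparr>)"
  using subgroup.subgroup_is_group[OF subH grpA] .

lemma Ev_H: "c \<in> lists {p. snd p \<in> Xs} \<Longrightarrow> Ev c \<in> H"
proof -
  assume c: "c \<in> lists {p. snd p \<in> Xs}"
  have "word_eval (A\<lparr>carrier := H\<rparr>) cgv c \<in> carrier (A\<lparr>carrier := H\<rparr>)"
    by (rule group.word_eval_closed[OF grpG]) (use c cgv_H in auto)
  then show ?thesis using evalG[OF c] by simp
qed

lemma gen_H: "x \<in> H \<Longrightarrow> x \<in> generate (A\<lparr>carrier := H\<rparr>) (cgv ` Xs)"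
proof -
  assume xH: "x \<in> H"
  then have xA: "x \<in> carrier A" by (simp add: kernel_def)
  have genA: "generate A (gen ` V) = carrier A" and sub: "gen ` V \<subseteq> carrier A"
    using pres by (auto simp: presents_def)
  obtain w where w: "w \<in> lists {p. snd p \<in> V}" "word_eval A gen w = x"
    using A.generate_word[OF sub, of x] xA genA by auto
  define f where "f = tfin 0 w"
  have fk: "f < k" using tfin_lt k_pos by (simp add: f_def)
  have tX: "tout 0 w \<in> lists {p. snd p \<in> Xs}" using tout_Xs k_pos w by simp
  have e: "Ev (tout 0 w) \<otimes>\<^bsub>A\<^esub> U [^]\<^bsub>A\<^esub> f = x"
    using L[OF k_pos w(1)] w(2) xA by (simp add: f_def)
  have EH: "Ev (tout 0 w) \<in> H" using Ev_H[OF tX] .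
  have EA: "Ev (tout 0 w) \<in> carrier A" using EH by (simp add: kernel_def)
  have "\<alpha> x = (\<alpha> (Ev (tout 0 w)) + \<alpha> (U [^]\<^bsub>A\<^esub> f)) mod int k"
    using hom_mult[OF hom EA, of "U [^]\<^bsub>A\<^esub> f"] e by simp
  also have "\<dots> = int f"
    using EH alpha_pow[of f] fk by (simp add: kernel_def)
  finally have "f = 0" using xH by (simp add: kernel_def)
  then have "x = Ev (tout 0 w)" using e EA by simp
  also have "\<dots> = word_eval (A\<lparr>carrier := H\<rparr>) cgv (tout 0 w)" using evalG[OF tX] by simp
  also have "\<dots> \<in> generate (A\<lparr>carrier := H\<rparr>) (cgv ` Xs)"
    by (rule group.word_in_generate[OF grpG]) (use cgv_H tX in auto)
  finally show ?thesis .
qed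

lemma main: "presents (A\<lparr>carrier := H\<rparr>) Xs R cgv"
  unfolding presents_def
proof (intro conjI ballI)
  show "group (A\<lparr>carrier := H\<rparr>)" by (rule grpG)
  show sub: "cgv ` Xs \<subseteq> carrier (A\<lparr>carrier := H\<rparr>)" using cgv_H by auto
  show "generate (A\<lparr>carrier := H\<rparr>) (cgv ` Xs) = carrier (A\<lparr>carrier := H\<rparr>)"
    using group.generate_incl[OF grpG sub] gen_H by auto
next
  fix c1 c2 :: "'v cletter word"
  assume c: "c1 \<in> lists {p. snd p \<in> Xs}" "c2 \<in> lists {p. snd p \<in> Xs}"
  show "word_eval (A\<lparr>carrier := H\<rparr>) cgv c1 = word_eval (A\<lparr>carrier := H\<rparr>) cgv c2 \<longleftrightarrow> pres_eqv R c1 c2"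
    unfolding evalG[OF c(1)] evalG[OF c(2)]
  proof
    assume "Ev c1 = Ev c2"
    then have "word_eval A gen (rho c1) = word_eval A gen (rho c2)"
      using rho_eval c by simp
    then have "pres_eqv (artin_rels E m) (rho c1) (rho c2)"
      using pres_words rho_V c by blast
    then have "ok (rho c1) (rho c2)" by (rule eqv_ok)
    then have "pres_eqv R (tout 0 (rho c1)) (tout 0 (rho c2))"
      using k_pos by (simp add: ok_def)
    then show "pres_eqv R c1 c2" using tout_rho c by simp
  next
    assume "pres_eqv R c1 c2"
    then show "Ev c1 = Ev c2" using eqv_sound F_id c by metis
  qed
qed

end



theorem theorem2p1:
  fixes V :: "'v set" and E :: "'v set set" and m :: "'v set \<Rightarrow> nat"
    and A :: "('g, 'b) monoid_scheme" and gen :: "'v \<Rightarrow> 'g"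
    and \<alpha> :: "'g \<Rightarrow> int" and u :: 'v and k :: nat
  assumes "even_labeled_graph V E m"
    and "presents A V (artin_rels E m) gen"
    and "u \<in> V" and "2 \<le> k"
    and "\<alpha> \<in> hom A (integer_mod_group k)"
    and "\<alpha> (gen u) = 1"
    and "\<And>v. v \<in> V \<Longrightarrow> v \<noteq> u \<Longrightarrow> \<alpha> (gen v) = 0"
  shows "presents (A\<lparr>carrier := kernel A (integer_mod_group k) \<alpha>\<rparr>)
           (cocyc_gens V E m u k) (cocyc_rels V E m u k) (cocyc_gen_val A gen u k)"
proof -
  interpret cocyc V E m A gen \<alpha> u k using assms by unfold_locales
  show ?thesis using main .
qed

end
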